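(* Under the setting and Assumptions A and B described in the context, let $\Delta_0>0$ be the constant given by the following statement (Theorem 3.7 of the source): for non-increasing step sizes with $\eta_0\le\Delta_0$ one has $D_{KL}(\bar\rho_{T_k}\|\rho_{T_k})\le c_1\eta_0^2e^{-A_0T_k}+c_2d\int_0^{T_k}e^{-A_0(T_k-s)}f(s)\,ds$ with $f=\sum_i\eta_i^2\mathbf 1_{[T_i,T_{i+1})}$ and constants $A_0,c_1,c_2>0$ independent of $k,d$. Let $\theta\in(0,1)$, let $\ell$ be a positive integer with $\ell^{-\theta}\le\Delta_0$, and set $\eta_i=(\ell+i)^{-\theta}$ for $i=0,1,2,\dots$. Then there exist $k_0>0$ and $c>0$ such that for all $k>k_0$, $$D_{KL}(\bar\rho_{T_k}\|\rho_{T_k})\le c\,d\,\Big(\frac1k\Big)^{2\theta}.$$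
   Context: Setting: $d\ge1$, $\beta>0$. Let $\nu$ be a probability distribution of a random element $\xi$; for each $\xi$ let $U(\cdot;\xi):\mathbb{R}^d\to\mathbb{R}$ be differentiable, $U(x)=\mathbb{E}_{\xi\sim\nu}[U(x;\xi)]$, $b^\xi=-\nabla U(\cdot;\xi)$, $b=-\nabla U$, and $\pi(x)\propto e^{-\beta U(x)}$. Langevin diffusion: $dX_t=b(X_t)dt+\sqrt{2\beta^{-1}}dW_t$, $X_0\sim\rho_0$, with $\rho_t$ the density of $X_t$. SGLD: given step sizes $\eta_k>0$, set $T_0=0$, $T_k=\sum_{i=0}^{k-1}\eta_i$; let $\xi_0,\xi_1,\dots$ be i.i.d. with law $\nu$, independent of a standard Brownian motion $W$ in $\mathbb{R}^d$ and of $\bar X_0\sim\rho_0$; for $t\in[T_k,T_{k+1})$ define $\bar X_t=\bar X_{T_k}+(t-T_k)b^{\xi_k}(\bar X_{T_k})+\sqrt{2\beta^{-1}}(W_t-W_{T_k})$, and let $\bar\rho_t$ be the density of $\bar X_t$. $D_{KL}(\mu\|\nu)=\int\log\frac{d\mu}{d\nu}\,d\mu$. Assumption A: (a) for $\nu$-a.e. $\xi$ and all $x,y$, $|b^\xi(x)-b^\xi(y)|\le L|x-y|$; (b) for $\nu$-a.e. $\xi$ and all $x,y$, $|\nabla b^\xi(x)-\nabla b^\xi(y)|\le L_2d^{-1/2}|x-y|$ (spectral norm on the left); (c) for $\nu$-a.e. $\xi$, $x\cdot b^\xi(x)\le-\mu|x|^2+\sigma$ for all $x$; (d) $\operatorname{ess\,sup}_\xi\|b^\xi-b\|_{L^\infty(\mathbb{R}^d)}<\infty$.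 The constants $L,L_2,\mu,\sigma>0$ are independent of $\xi$ and $d$. Assumption B: (a) there is $\lambda\ge1$, independent of $d$, with $\frac1\lambda\le\frac{\rho_0}{\pi}\le\lambda$; (b) $\pi$ satisfies a log-Sobolev inequality with constant $C_\pi^{LS}$: for all positive smooth $f$, $\int f\log f\,d\pi-(\int f\,d\pi)\log(\int f\,d\pi)\le C_\pi^{LS}\int\frac{|\nabla f|^2}{f}d\pi$. *)

theory Defs
  imports "HOL-Probability.Probability"
begin

fun Ck :: "nat \<Rightarrow> ('a::euclidean_space \<Rightarrow> real) \<Rightarrow> bool" where
  "Ck 0 f = continuous_on UNIV f"
| "Ck (Suc k) f = ((\<forall>x. f differentiable (at x)) \<and>
      (\<forall>v. Ck k (\<lambda>x. frechet_derivative f (at x) v)))"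

definition smooth_fun :: "('a::euclidean_space \<Rightarrow> real) \<Rightarrow> bool" where
  "smooth_fun f \<longleftrightarrow> (\<forall>k. Ck k f)"

definition log_sobolev :: "'a::euclidean_space measure \<Rightarrow> real \<Rightarrow> bool" where
  "log_sobolev P C \<longleftrightarrow>
    (\<forall>f g. (\<forall>x. f x > 0) \<longrightarrow> smooth_fun f \<longrightarrow> (\<forall>x. GDERIV f x :> g x) \<longrightarrow>
      integrable P f \<longrightarrow> integrable P (\<lambda>x. f x * ln (f x)) \<longrightarrow>
      integrable P (\<lambda>x. (norm (g x))\<^sup>2 / f x) \<longrightarrow>
      (\<integral>x. f x * ln (f x) \<partial>P) - (\<integral>x. f x \<partial>P) * ln (\<integral>x. f x \<partial>P)
        \<le> C * (\<integral>x. (norm (g x))\<^sup>2 / f x \<partial>P))"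

definition gibbs_density :: "real \<Rightarrow> ('a::euclidean_space \<Rightarrow> real) \<Rightarrow> 'a \<Rightarrow> real" where
  "gibbs_density \<beta> U x = exp (- \<beta> * U x) / (\<integral>y. exp (- \<beta> * U y) \<partial>lborel)"

text \<open>D_KL(mu||nu) = int log (d mu / d nu) d mu, and +infinity if mu is not
  absolutely continuous w.r.t. nu or the integral diverges.
  Note RN_deriv nu mu is the density of mu w.r.t. nu.\<close>
definition DKL :: "'a measure \<Rightarrow> 'a measure \<Rightarrow> ereal" where
  "DKL \<mu> \<nu> = (if absolutely_continuous \<nu> \<mu> \<and> sets \<mu> = sets \<nu> \<and>
       integrable \<mu> (\<lambda>x. ln (enn2real (RN_deriv \<nu> \<mu> x)))
     then ereal (\<integral>x. ln (enn2real (RN_deriv \<nu> \<mu> x)) \<partial>\<mu>) else \<infinity>)"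

definition std_gauss_density :: "real \<Rightarrow> 'a::euclidean_space \<Rightarrow> real" where
  "std_gauss_density v x = (\<Prod>e\<in>Basis. normal_density 0 (sqrt v) (x \<bullet> e))"

definition brownian_motion :: "'w measure \<Rightarrow> (real \<Rightarrow> 'w \<Rightarrow> 'a::euclidean_space) \<Rightarrow> bool" where
  "brownian_motion M W \<longleftrightarrow>
     (\<forall>t. W t \<in> borel_measurable M) \<and>
     (\<forall>\<omega>\<in>space M. W 0 \<omega> = 0) \<and>
     (\<forall>\<omega>\<in>space M. continuous_on {0..} (\<lambda>t. W t \<omega>)) \<and>
     (\<forall>s t. 0 \<le> s \<longrightarrow> s < t \<longrightarrow>
        distr M borel (\<lambda>\<omega>. W t \<omega> - W s \<omega>) =
        density lborel (\<lambda>x. ennreal (std_gauss_density (t - s) x))) \<and>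
     (\<forall>(ts :: nat \<Rightarrow> real) n. 0 \<le> ts 0 \<longrightarrow> (\<forall>j<n. ts j < ts (Suc j)) \<longrightarrow>
        prob_space.indep_vars M (\<lambda>_. borel) (\<lambda>j \<omega>. W (ts (Suc j)) \<omega> - W (ts j) \<omega>) {..<n})"

definition Tk :: "(nat \<Rightarrow> real) \<Rightarrow> nat \<Rightarrow> real" where
  "Tk \<eta> k = (\<Sum>i<k. \<eta> i)"

text \<open>The SGLD process sampled at the grid times T_k (X-bar at time T_k).\<close>
fun sgld :: "real \<Rightarrow> (nat \<Rightarrow> real) \<Rightarrow> ('x \<Rightarrow> 'a \<Rightarrow> 'a::euclidean_space) \<Rightarrow>
   (nat \<Rightarrow> 'w \<Rightarrow> 'x) \<Rightarrow> (real \<Rightarrow> 'w \<Rightarrow> 'a) \<Rightarrow> ('w \<Rightarrow> 'a) \<Rightarrow> nat \<Rightarrow> 'w \<Rightarrow> 'a" where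
  "sgld \<beta> \<eta> bx \<xi> W X0 0 \<omega> = X0 \<omega>"
| "sgld \<beta> \<eta> bx \<xi> W X0 (Suc k) \<omega> =
     sgld \<beta> \<eta> bx \<xi> W X0 k \<omega> + \<eta> k *\<^sub>R bx (\<xi> k \<omega>) (sgld \<beta> \<eta> bx \<xi> W X0 k \<omega>)
     + sqrt (2 / \<beta>) *\<^sub>R (W (Tk \<eta> (Suc k)) \<omega> - W (Tk \<eta> k) \<omega>)"

definition step_profile :: "(nat \<Rightarrow> real) \<Rightarrow> real \<Rightarrow> real" where
  "step_profile \<eta> s = (\<Sum>i. (\<eta> i)\<^sup>2 * indicator {Tk \<eta> i..<Tk \<eta> (Suc i)} s)"

definition thm37_bound :: "'w measure \<Rightarrow> real \<Rightarrow> ('x \<Rightarrow> 'a \<Rightarrow> 'a::euclidean_space) \<Rightarrow>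
   (nat \<Rightarrow> 'w \<Rightarrow> 'x) \<Rightarrow> (real \<Rightarrow> 'w \<Rightarrow> 'a) \<Rightarrow> ('w \<Rightarrow> 'a) \<Rightarrow> (real \<Rightarrow> 'w \<Rightarrow> 'a) \<Rightarrow> real \<Rightarrow> bool" where
  "thm37_bound M \<beta> bx \<xi> W X0 X \<Delta>0 \<longleftrightarrow>
    (\<exists>A0 c1 c2. A0 > 0 \<and> c1 > 0 \<and> c2 > 0 \<and>
      (\<forall>\<eta>::nat \<Rightarrow> real. (\<forall>i. \<eta> i > 0) \<longrightarrow> decseq \<eta> \<longrightarrow> \<eta> 0 \<le> \<Delta>0 \<longrightarrow>
        (\<forall>k. DKL (distr M borel (sgld \<beta> \<eta> bx \<xi> W X0 k)) (distr M borel (X (Tk \<eta> k)))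
          \<le> ereal (c1 * (\<eta> 0)\<^sup>2 * exp (- A0 * Tk \<eta> k)
              + c2 * real DIM('a) * integral {0..Tk \<eta> k}
                  (\<lambda>s. exp (- A0 * (Tk \<eta> k - s)) * step_profile \<eta> s)))))"

end

theory Submission
  imports Defs "HOL-Real_Asymp.Real_Asymp"
begin

lemma step_profile_le:
  fixes \<eta> :: "nat \<Rightarrow> real"
  assumes pos: "\<And>i. \<eta> i > 0" and dec: "decseq \<eta>" and A0: "A0 \<ge> (0::real)"
  shows "exp (- A0 * (T - s)) * step_profile \<eta> s
     \<le> (\<eta> 0)\<^sup>2 * exp (- A0 * (T - Tk \<eta> m)) + (\<eta> m)\<^sup>2 * exp (- A0 * (T - s))"
proof -
  have Tmono: "Tk \<eta> i \<le> Tk \<eta> j" if "i \<le> j" for i j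
    unfolding Tk_def using pos that by (intro sum_mono2) (auto intro: less_imp_le)
  let ?P = "\<lambda>i. Tk \<eta> i \<le> s \<and> s < Tk \<eta> (Suc i)"
  have uniq: "i = j" if "?P i" "?P j" for i j
  proof (rule ccontr)
    assume "i \<noteq> j"
    then consider "Suc i \<le> j" | "Suc j \<le> i" by linarith
    then show False using that Tmono by cases (fastforce+)
  qed
  have nn: "0 \<le> (\<eta> 0)\<^sup>2 * exp (- A0 * (T - Tk \<eta> m)) + (\<eta> m)\<^sup>2 * exp (- A0 * (T - s))"
    by simp
  show ?thesis
  proof (cases "\<exists>i. ?P i")
    case False
    then have "\<And>i. (\<eta> i)\<^sup>2 * indicator {Tk \<eta> i..<Tk \<eta> (Suc i)} s = (0::real)"
      by (auto simp: indicator_def)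
    then have "(\<lambda>i. (\<eta> i)\<^sup>2 * indicator {Tk \<eta> i..<Tk \<eta> (Suc i)} s) = (\<lambda>_. (0::real))"
      by (intro ext) simp
    then have "step_profile \<eta> s = 0" unfolding step_profile_def by simp
    then show ?thesis using nn by simp
  next
    case True
    then obtain i where Pi: "?P i" by blast
    have "(\<lambda>n. (\<eta> n)\<^sup>2 * indicator {Tk \<eta> n..<Tk \<eta> (Suc n)} s) sums
          (\<Sum>n\<in>{i}. (\<eta> n)\<^sup>2 * indicator {Tk \<eta> n..<Tk \<eta> (Suc n)} s)"
      by (rule sums_finite) (use uniq Pi in \<open>auto simp: indicator_def\<close>)
    then have sp: "step_profile \<eta> s = (\<eta> i)\<^sup>2"
      unfolding step_profile_def using Pi by (simp add: sums_iff indicator_def)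
    show ?thesis
    proof (cases "i < m")
      case True
      have "Tk \<eta> (Suc i) \<le> Tk \<eta> m" using True Tmono by simp
      then have "s \<le> Tk \<eta> m" using Pi by simp
      then have e: "exp (- A0 * (T - s)) \<le> exp (- A0 * (T - Tk \<eta> m))"
        using A0 by (simp add: mult_left_mono)
      have "(\<eta> i)\<^sup>2 \<le> (\<eta> 0)\<^sup>2"
        using dec pos by (intro power_mono) (auto simp: decseq_def less_imp_le)
      then have "exp (- A0 * (T - s)) * (\<eta> i)\<^sup>2 \<le> (\<eta> 0)\<^sup>2 * exp (- A0 * (T - Tk \<eta> m))"
        using e by (simp add: mult.commute mult_mono)
      then show ?thesis unfolding sp by (simp add: add_increasing2)
    next
      case False
      have "(\<eta> i)\<^sup>2 \<le> (\<eta> m)\<^sup>2"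
        using dec pos False by (intro power_mono) (auto simp: decseq_def less_imp_le)
      then show ?thesis unfolding sp
        by (simp add: mult.commute mult_left_mono add_increasing)
    qed
  qed
qed

lemma exp_has_integral:
  fixes A0 T :: real assumes "A0 > 0" "T \<ge> 0"
  shows "((\<lambda>s. exp (- A0 * (T - s))) has_integral (1 - exp (- A0 * T)) / A0) {0..T}"
proof -
  have "((\<lambda>s. exp (- A0 * (T - s))) has_integral
          (exp (- A0 * (T - T)) / A0 - exp (- A0 * (T - 0)) / A0)) {0..T}"
  proof (rule fundamental_theorem_of_calculus)
    show "0 \<le> T" by fact
    fix x :: real assume "x \<in> {0..T}"
    have "((\<lambda>s. exp (- A0 * (T - s)) / A0) has_real_derivative exp (- A0 * (T - x))) (at x within {0..T})"
      using assms(1) by (auto intro!: derivative_eq_intros)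
    then show "((\<lambda>s. exp (- A0 * (T - s)) / A0) has_vector_derivative exp (- A0 * (T - x))) (at x within {0..T})"
      by (simp add: has_real_derivative_iff_has_vector_derivative)
  qed
  then show ?thesis by (simp add: diff_divide_distrib)
qed

lemma int_bound:
  fixes \<eta> :: "nat \<Rightarrow> real"
  assumes pos: "\<And>i. \<eta> i > 0" and dec: "decseq \<eta>" and A0: "A0 > (0::real)" and T: "T \<ge> 0"
  shows "integral {0..T} (\<lambda>s. exp (- A0 * (T - s)) * step_profile \<eta> s)
     \<le> T * ((\<eta> 0)\<^sup>2 * exp (- A0 * (T - Tk \<eta> m))) + (\<eta> m)\<^sup>2 / A0"
proof -
  let ?G = "\<lambda>s. (\<eta> 0)\<^sup>2 * exp (- A0 * (T - Tk \<eta> m)) + (\<eta> m)\<^sup>2 * exp (- A0 * (T - s))"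
  have hG: "(?G has_integral (T * ((\<eta> 0)\<^sup>2 * exp (- A0 * (T - Tk \<eta> m)))
        + (\<eta> m)\<^sup>2 * ((1 - exp (- A0 * T)) / A0))) {0..T}"
    using T by (intro has_integral_add has_integral_mult_right exp_has_integral A0)
       (auto intro: has_integral_const_real[THEN has_integral_eq_rhs])
  have le1: "(\<eta> m)\<^sup>2 * ((1 - exp (- A0 * T)) / A0) \<le> (\<eta> m)\<^sup>2 / A0"
  proof -
    have "(1 - exp (- A0 * T)) \<le> 1" by simp
    then have "(\<eta> m)\<^sup>2 * (1 - exp (- A0 * T)) \<le> (\<eta> m)\<^sup>2 * 1"
      by (intro mult_left_mono) auto
    then show ?thesis using A0 by (simp add: divide_right_mono)
  qed
  show ?thesis
  proof (cases "(\<lambda>s. exp (- A0 * (T - s)) * step_profile \<eta> s) integrable_on {0..T}")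
    case True
    have "integral {0..T} (\<lambda>s. exp (- A0 * (T - s)) * step_profile \<eta> s) \<le> integral {0..T} ?G"
      by (rule integral_le[OF True]) (use hG step_profile_le[OF pos dec] A0 in auto)
    also have "\<dots> = T * ((\<eta> 0)\<^sup>2 * exp (- A0 * (T - Tk \<eta> m)))
        + (\<eta> m)\<^sup>2 * ((1 - exp (- A0 * T)) / A0)" using hG by (rule integral_unique)
    finally show ?thesis using le1 by linarith
  next
    case False
    then show ?thesis using T A0 by (simp add: not_integrable_integral)
  qed
qed

lemma sched_bound:
  fixes \<theta> A0 c1 c2 D :: real and ell :: nat and \<eta> :: "nat \<Rightarrow> real"
  assumes A0: "A0 > 0" and c1: "c1 > 0" and c2: "c2 > 0"
    and theta: "0 < \<theta>" "\<theta> < 1" and ell: "ell > 0"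
    and eta: "\<forall>i. \<eta> i = real (ell + i) powr (- \<theta>)" and D: "D \<ge> 1"
  shows "\<exists>k0::nat. k0 > 0 \<and> (\<exists>c>0. \<forall>k>k0.
     c1 * (\<eta> 0)\<^sup>2 * exp (- A0 * Tk \<eta> k)
       + c2 * D * integral {0..Tk \<eta> k} (\<lambda>s. exp (- A0 * (Tk \<eta> k - s)) * step_profile \<eta> s)
     \<le> c * D * (1 / real k) powr (2 * \<theta>))"
proof -
  have pos: "\<eta> i > 0" for i using eta ell by simp
  have dec: "decseq \<eta>"
    unfolding decseq_def using eta ell theta by (auto intro!: powr_mono2')
  have eta_le1: "\<eta> i \<le> 1" for i
  proof -
    have "1 \<le> real (ell + i) powr \<theta>"
      using ell theta by (intro ge_one_powr_ge_zero) auto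
    then have "inverse (real (ell + i) powr \<theta>) \<le> 1" by (simp add: inverse_le_1_iff)
    then show ?thesis using eta by (simp add: powr_minus)
  qed
  have lim: "((\<lambda>x::real. x powr (1+2*\<theta>) * exp (-A0 * x powr (1-\<theta>) / 4)) \<longlongrightarrow> 0) at_top"
    using A0 theta by real_asymp
  then have "eventually (\<lambda>x::real. x powr (1+2*\<theta>) * exp (-A0 * x powr (1-\<theta>) / 4) < 1) at_top"
    by (rule order_tendstoD) simp
  then have "eventually (\<lambda>k::nat. real k powr (1+2*\<theta>) * exp (-A0 * real k powr (1-\<theta>) / 4) < 1) sequentially"
    using filterlim_real_sequentially unfolding filterlim_iff by blast
  then obtain N where N: "\<And>k. k \<ge> N \<Longrightarrow> real k powr (1+2*\<theta>) * exp (-A0 * real k powr (1-\<theta>) / 4) < 1"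
    unfolding eventually_sequentially by blast
  define c where "c = c1 + c2 + 9 * c2 / A0"
  have cpos: "c > 0" unfolding c_def using c1 c2 A0 by (simp add: add_pos_nonneg)
  show ?thesis
  proof (intro exI[of _ "max N (max ell 3)"] conjI exI[of _ c] cpos allI impI)
    show "max N (max ell 3) > 0" by simp
    fix k assume k: "k > max N (max ell 3)"
    define T where "T = Tk \<eta> k"
    define m where "m = k div 2"
    define q where "q = real k powr (- 2 * \<theta>)"
    define \<epsilon> where "\<epsilon> = exp (-A0 * real k powr (1-\<theta>) / 4)"
    have k1: "real k \<ge> 1" using k by simp
    have T0: "T \<ge> 0" unfolding T_def Tk_def using pos by (simp add: sum_nonneg less_imp_le)
    have Tk_le: "T \<le> real k" unfolding T_def Tk_def
      using sum_bounded_above[of "{..<k}" \<eta> 1] eta_le1 by simp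
    have Tm0: "Tk \<eta> m \<ge> 0" unfolding Tk_def using pos by (simp add: sum_nonneg less_imp_le)
    have split: "T - Tk \<eta> m = sum \<eta> {m..<k}"
    proof -
      have "{..<k} = {..<m} \<union> {m..<k}" unfolding m_def by auto
      then show ?thesis unfolding T_def Tk_def
        by (simp add: sum.union_disjoint ivl_disj_int)
    qed
    have "sum \<eta> {m..<k} \<ge> real (card {m..<k}) * \<eta> k"
      by (rule sum_bounded_below) (use dec in \<open>auto simp: decseq_def\<close>)
    moreover have "real (card {m..<k}) \<ge> real k / 2" unfolding m_def by simp
    moreover have etak: "\<eta> k \<ge> real k powr (-\<theta>) / 2"
    proof -
      have "\<eta> k \<ge> (2 * real k) powr (-\<theta>)"
        using eta k theta by (auto intro!: powr_mono2')
      moreover have "(2 * real k) powr (-\<theta>) = 2 powr (-\<theta>) * real k powr (-\<theta>)"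
        by (simp add: powr_mult)
      moreover have "2 powr (-\<theta>) \<ge> (2::real) powr (-1)"
        using theta by (intro powr_mono) auto
      moreover have "(2::real) powr (-1) = 1/2" by (simp add: powr_minus_divide)
      ultimately have h3: "2 powr (-\<theta>) \<ge> (1/2::real)" by simp
      have "1/2 * real k powr (-\<theta>) \<le> 2 powr (-\<theta>) * real k powr (-\<theta>)"
        by (rule mult_right_mono[OF h3]) simp
      then have "\<eta> k \<ge> 1/2 * real k powr (-\<theta>)"
        using \<open>\<eta> k \<ge> (2 * real k) powr (-\<theta>)\<close> \<open>(2 * real k) powr (-\<theta>) = 2 powr (-\<theta>) * real k powr (-\<theta>)\<close>
        by linarith
      then show ?thesis by simp
    qed
    ultimately have "T - Tk \<eta> m \<ge> (real k / 2) * (real k powr (-\<theta>) / 2)"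
      unfolding split
      by (meson mult_mono order_trans of_nat_0_le_iff divide_nonneg_nonneg powr_ge_zero zero_le_numeral)
    moreover have "real k powr (1-\<theta>) = real k * real k powr (-\<theta>)"
      using k1 by (simp add: powr_diff powr_minus field_simps)
    ultimately have gap: "T - Tk \<eta> m \<ge> real k powr (1-\<theta>) / 4" by simp
    have e1: "exp (- A0 * (T - Tk \<eta> m)) \<le> \<epsilon>" unfolding \<epsilon>_def using gap A0 by simp
    have e2: "exp (- A0 * T) \<le> \<epsilon>" unfolding \<epsilon>_def using gap A0 Tm0 by simp
    have "real k powr (1+2*\<theta>) * \<epsilon> < 1" unfolding \<epsilon>_def using N k by simp
    moreover have "real k powr (1+2*\<theta>) = real k * real k powr (2*\<theta>)"
      using k1 by (simp add: powr_add)
    moreover have qq: "q = 1 / real k powr (2*\<theta>)" unfolding q_def by (simp add: powr_minus_divide)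
    moreover have "real k powr (2*\<theta>) > 0" using k1 by simp
    ultimately have "(real k * \<epsilon>) * real k powr (2*\<theta>) < q * real k powr (2*\<theta>)"
      by (metis (no_types, lifting) mult.commute mult.left_commute nonzero_eq_divide_eq order_less_irrefl)
    then have keps: "real k * \<epsilon> \<le> q"
      using \<open>real k powr (2*\<theta>) > 0\<close> by (simp add: mult_less_cancel_right_pos)
    have eps0: "\<epsilon> \<ge> 0" unfolding \<epsilon>_def by simp
    have epsq: "\<epsilon> \<le> q" using keps k1 eps0
      using mult_right_mono[of 1 "real k" \<epsilon>] by simp
    have etam: "(\<eta> m)\<^sup>2 \<le> 9 * q"
    proof -
      have m3: "real k / 3 \<le> real (ell + m)" unfolding m_def using k by simp linarith
      have kp0: "real k / 3 > 0" using k1 by simp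
      have "\<eta> m \<le> (real k / 3) powr (-\<theta>)"
        unfolding eta[rule_format] by (rule powr_mono2') (use m3 kp0 theta in auto)
      also have "(real k / 3) powr (-\<theta>) = real k powr (-\<theta>) * 3 powr \<theta>"
      proof -
        have "(real k / 3) powr (-\<theta>) = real k powr (-\<theta>) / 3 powr (-\<theta>)"
          by (rule powr_divide)
        also have "(3::real) powr (-\<theta>) = inverse (3 powr \<theta>)" by (rule powr_minus)
        finally show ?thesis by (simp only: divide_inverse inverse_inverse_eq)
      qed
      also have "\<dots> \<le> real k powr (-\<theta>) * 3"
      proof (rule mult_left_mono)
        show "3 powr \<theta> \<le> (3::real)" using powr_mono[of \<theta> 1 3] theta by simp
      qed simp
      finally have "\<eta> m \<le> 3 * real k powr (-\<theta>)" by simp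
      then have "(\<eta> m)\<^sup>2 \<le> (3 * real k powr (-\<theta>))\<^sup>2"
        using pos[of m] by (intro power_mono) auto
      also have "\<dots> = 9 * (real k powr (-\<theta>) * real k powr (-\<theta>))"
        by (simp add: power2_eq_square)
      also have "real k powr (-\<theta>) * real k powr (-\<theta>) = q"
      proof -
        have "real k powr (-\<theta>) * real k powr (-\<theta>) = real k powr (-\<theta> + -\<theta>)"
          by (rule powr_add[symmetric])
        also have "-\<theta> + -\<theta> = - 2 * \<theta>" by simp
        finally show ?thesis unfolding q_def .
      qed
      finally show ?thesis by simp
    qed
    have I: "integral {0..T} (\<lambda>s. exp (- A0 * (T - s)) * step_profile \<eta> s)
       \<le> T * ((\<eta> 0)\<^sup>2 * exp (- A0 * (T - Tk \<eta> m))) + (\<eta> m)\<^sup>2 / A0"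
      by (rule int_bound[OF pos dec A0 T0])
    have "(\<eta> 0)\<^sup>2 \<le> 1" using eta_le1[of 0] pos[of 0]
      by (simp add: power_le_one)
    then have "(\<eta> 0)\<^sup>2 * exp (- A0 * (T - Tk \<eta> m)) \<le> 1 * \<epsilon>"
      using e1 by (intro mult_mono) auto
    then have Tb: "T * ((\<eta> 0)\<^sup>2 * exp (- A0 * (T - Tk \<eta> m))) \<le> real k * \<epsilon>"
      using Tk_le T0 eps0 by (intro mult_mono) auto
    have c1b: "c1 * (\<eta> 0)\<^sup>2 * exp (- A0 * T) \<le> c1 * q"
    proof -
      have "(\<eta> 0)\<^sup>2 * exp (- A0 * T) \<le> 1 * \<epsilon>"
        using e2 \<open>(\<eta> 0)\<^sup>2 \<le> 1\<close> by (intro mult_mono) auto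
      then have "(\<eta> 0)\<^sup>2 * exp (- A0 * T) \<le> q" using epsq by simp
      then show ?thesis using c1 by (simp add: mult.assoc mult_left_mono)
    qed
    have Ib: "integral {0..T} (\<lambda>s. exp (- A0 * (T - s)) * step_profile \<eta> s) \<le> q + 9 * q / A0"
    proof -
      have "(\<eta> m)\<^sup>2 / A0 \<le> 9 * q / A0" using etam A0 by (intro divide_right_mono) auto
      then show ?thesis using I Tb keps by linarith
    qed
    have qe: "(1 / real k) powr (2 * \<theta>) = q" unfolding q_def
      using k1 by (simp add: powr_divide powr_minus_divide)
    have q0: "q \<ge> 0" unfolding q_def by simp
    have "c2 * D * integral {0..T} (\<lambda>s. exp (- A0 * (T - s)) * step_profile \<eta> s)
        \<le> c2 * D * (q + 9 * q / A0)"
      using Ib c2 D by (intro mult_left_mono) auto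
    moreover have "c1 * q \<le> c1 * D * q" using c1 D q0
    proof -
      have "(c1 * q) * 1 \<le> (c1 * q) * D" using c1 D q0 by (intro mult_left_mono) auto
      then show ?thesis by (simp add: algebra_simps)
    qed
    moreover have "c * D * q = c1 * D * q + c2 * D * (q + 9 * q / A0)"
      unfolding c_def by (simp add: algebra_simps)
    ultimately have fin: "c1 * (\<eta> 0)\<^sup>2 * exp (- A0 * T)
       + c2 * D * integral {0..T} (\<lambda>s. exp (- A0 * (T - s)) * step_profile \<eta> s)
       \<le> c * D * q" using c1b by linarith
    show "c1 * (\<eta> 0)\<^sup>2 * exp (- A0 * Tk \<eta> k)
       + c2 * D * integral {0..Tk \<eta> k} (\<lambda>s. exp (- A0 * (Tk \<eta> k - s)) * step_profile \<eta> s)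
     \<le> c * D * (1 / real k) powr (2 * \<theta>)"
      using fin unfolding qe T_def .
  qed
qed

theorem corollary3p10:
  fixes M :: "'w measure" and N :: "'x measure"
    and U :: "'x \<Rightarrow> 'a::euclidean_space \<Rightarrow> real"
    and bx :: "'x \<Rightarrow> 'a \<Rightarrow> 'a" and Dbx :: "'x \<Rightarrow> 'a \<Rightarrow> 'a \<Rightarrow> 'a"
    and b :: "'a \<Rightarrow> 'a"
    and W :: "real \<Rightarrow> 'w \<Rightarrow> 'a" and \<xi> :: "nat \<Rightarrow> 'w \<Rightarrow> 'x" and X0 :: "'w \<Rightarrow> 'a"
    and X :: "real \<Rightarrow> 'w \<Rightarrow> 'a" and \<rho>0 :: "'a \<Rightarrow> real"
    and \<beta> L L2 \<mu> \<sigma> lam CLS \<Delta>0 \<theta> :: real and ell :: nat and \<eta> :: "nat \<Rightarrow> real"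
  assumes beta: "\<beta> > 0"
    and probM: "prob_space M" and probN: "prob_space N"
    \<comment> \<open>U(.;xi) differentiable with b^xi = - grad U(.;xi)\<close>
    and U_grad: "\<forall>z x. GDERIV (U z) x :> - bx z x"
    and U_int: "\<forall>x. integrable N (\<lambda>z. U z x)"
    \<comment> \<open>b = - grad U, U(x) = E U(x;xi)\<close>
    and Ubar_grad: "\<forall>x. GDERIV (\<lambda>y. \<integral>z. U z y \<partial>N) x :> - b x"
    and Z_int: "integrable lborel (\<lambda>x. exp (- \<beta> * (\<integral>z. U z x \<partial>N)))"
    \<comment> \<open>Assumption A\<close>
    and pos_const: "L > 0" "L2 > 0" "\<mu> > 0" "\<sigma> > 0"
    and A_a: "AE z in N. \<forall>x y. norm (bx z x - bx z y) \<le> L * norm (x - y)"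
    and A_b: "AE z in N. (\<forall>x. (bx z has_derivative Dbx z x) (at x)) \<and>
               (\<forall>x y. onorm (\<lambda>h. Dbx z x h - Dbx z y h)
                        \<le> L2 / sqrt (real DIM('a)) * norm (x - y))"
    and A_c: "AE z in N. \<forall>x. x \<bullet> bx z x \<le> - \<mu> * (norm x)\<^sup>2 + \<sigma>"
    and A_d: "\<exists>C. AE z in N. \<forall>x. norm (bx z x - b x) \<le> C"
    \<comment> \<open>Assumption B\<close>
    and rho0_meas: "\<rho>0 \<in> borel_measurable borel" and rho0_nn: "\<forall>x. \<rho>0 x \<ge> 0"
    and lam: "lam \<ge> 1"
    and B_a: "\<forall>x. 1 / lam \<le> \<rho>0 x / gibbs_density \<beta> (\<lambda>y. \<integral>z. U z y \<partial>N) x \<and>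
                  \<rho>0 x / gibbs_density \<beta> (\<lambda>y. \<integral>z. U z y \<partial>N) x \<le> lam"
    and B_b: "log_sobolev
               (density lborel (\<lambda>x. ennreal (gibbs_density \<beta> (\<lambda>y. \<integral>z. U z y \<partial>N) x))) CLS"
    \<comment> \<open>randomness: Brownian motion, i.i.d. xi_k with law nu, X0 with density rho0, all independent\<close>
    and BM: "brownian_motion M W"
    and xi_meas: "\<forall>k. \<xi> k \<in> measurable M N"
    and xi_law: "\<forall>k. distr M N (\<xi> k) = N"
    and X0_meas: "X0 \<in> borel_measurable M"
    and X0_law: "distr M borel X0 = density lborel (\<lambda>x. ennreal (\<rho>0 x))"
    and indep: "prob_space.indep_sets M
       (\<lambda>i. case i of
           None \<Rightarrow> {X0 -` A \<inter> space M | A. A \<in> sets borel}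
         | Some None \<Rightarrow> sigma_sets (space M) (\<Union>t\<in>{0..}. {W t -` A \<inter> space M | A. A \<in> sets borel})
         | Some (Some k) \<Rightarrow> {\<xi> k -` A \<inter> space M | A. A \<in> sets N}) UNIV"
    \<comment> \<open>Langevin diffusion (additive noise, pathwise integral form), X_0 ~ rho0\<close>
    and X_cont: "\<forall>\<omega>\<in>space M. continuous_on {0..} (\<lambda>t. X t \<omega>)"
    and X_eq: "\<forall>\<omega>\<in>space M. \<forall>t\<ge>0.
       X t \<omega> = X0 \<omega> + integral {0..t} (\<lambda>s. b (X s \<omega>)) + sqrt (2 / \<beta>) *\<^sub>R W t \<omega>"
    \<comment> \<open>Delta_0 is the constant of Theorem 3.7\<close>
    and Delta0: "\<Delta>0 > 0"
    and thm37: "thm37_bound M \<beta> bx \<xi> W X0 X \<Delta>0"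
    \<comment> \<open>the polynomially decaying schedule\<close>
    and theta: "0 < \<theta>" "\<theta> < 1"
    and ell_pos: "ell > 0" "real ell powr (- \<theta>) \<le> \<Delta>0"
    and eta: "\<forall>i. \<eta> i = real (ell + i) powr (- \<theta>)"
  shows "\<exists>k0::nat. k0 > 0 \<and> (\<exists>c>0. \<forall>k>k0.
           DKL (distr M borel (sgld \<beta> \<eta> bx \<xi> W X0 k)) (distr M borel (X (Tk \<eta> k)))
             \<le> ereal (c * real DIM('a) * (1 / real k) powr (2 * \<theta>)))"
proof -
  obtain A0 c1 c2 where A0: "A0 > 0" and c1: "c1 > 0" and c2: "c2 > 0" and
    H: "\<And>\<eta>'::nat \<Rightarrow> real. (\<forall>i. \<eta>' i > 0) \<Longrightarrow> decseq \<eta>' \<Longrightarrow> \<eta>' 0 \<le> \<Delta>0 \<Longrightarrow>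
        (\<forall>k. DKL (distr M borel (sgld \<beta> \<eta>' bx \<xi> W X0 k)) (distr M borel (X (Tk \<eta>' k)))
          \<le> ereal (c1 * (\<eta>' 0)\<^sup>2 * exp (- A0 * Tk \<eta>' k)
              + c2 * real DIM('a) * integral {0..Tk \<eta>' k}
                  (\<lambda>s. exp (- A0 * (Tk \<eta>' k - s)) * step_profile \<eta>' s)))"
    using thm37 unfolding thm37_bound_def by blast
  have pos: "\<forall>i. \<eta> i > 0" using eta ell_pos by simp
  have dec: "decseq \<eta>"
    unfolding decseq_def using eta ell_pos theta by (auto intro!: powr_mono2')
  have e0: "\<eta> 0 \<le> \<Delta>0" using eta ell_pos by simp
  note B = H[OF pos dec e0]
  have D: "real DIM('a) \<ge> 1" by (simp add: DIM_positive Suc_leI)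
  obtain k0 c where k0: "k0 > 0" and c: "c > 0" and S: "\<And>k. k > k0 \<Longrightarrow>
     c1 * (\<eta> 0)\<^sup>2 * exp (- A0 * Tk \<eta> k)
       + c2 * real DIM('a) * integral {0..Tk \<eta> k} (\<lambda>s. exp (- A0 * (Tk \<eta> k - s)) * step_profile \<eta> s)
     \<le> c * real DIM('a) * (1 / real k) powr (2 * \<theta>)"
    using sched_bound[OF A0 c1 c2 theta ell_pos(1) eta D] by blast
  show ?thesis
  proof (intro exI[of _ k0] conjI k0 exI[of _ c] c allI impI)
    fix k assume "k > k0"
    show "DKL (distr M borel (sgld \<beta> \<eta> bx \<xi> W X0 k)) (distr M borel (X (Tk \<eta> k)))
             \<le> ereal (c * real DIM('a) * (1 / real k) powr (2 * \<theta>))"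
      using B[rule_format, of k] S[OF \<open>k > k0\<close>] by (meson ereal_less_eq(3) order_trans)
  qed
qed

end
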